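(* Let $T>0$ and $\mu>0$. For all $u,w\in H^1_{0,}(0,T)$, \[ b_\mu(u,\mathsf{T}_\mu w) = \int_0^T u'(t)w'(t)\,dt + \mu \int_0^T u(t)w(t)\,dt . \] In particular, for all $u,w\in H^1_{0,}(0,T)$, \[ b_\mu(u,\mathsf{T}_\mu w)\le \|u\|_{H^1_\mu}\|w\|_{H^1_\mu}\quad\text{and}\quad b_\mu(u,\mathsf{T}_\mu u) = \|u\|_{H^1_\mu}^2 . \]
   Context: All functions are real valued. $H^1_{0,}(0,T):=\{v\in H^1(0,T): v(0)=0\}$, $H^1_{,0}(0,T):=\{v\in H^1(0,T): v(T)=0\}$. The bilinear form $b_\mu:H^1_{0,}(0,T)\times H^1_{,0}(0,T)\to\mathbb{R}$ is \[ b_\mu(u,v):=\int_0^T\big[-u'(t)v'(t)+\mu\, u(t)v(t)\big]\,dt . \] $\|w\|_{H^1_\mu}:=(\|w'\|_{L^2(0,T)}^2+\mu\|w\|_{L^2(0,T)}^2)^{1/2}$. For $w\in H^1_{0,}(0,T)$, \[ (\mathsf{T}_\mu w)(t) := \int_t^T\Big[\cos(\sqrt{\mu}(t-s))\,w'(s) -\sqrt{\mu}\,\sin(\sqrt{\mu}(t-s))\,w(s)\Big]\, ds,\qquad t\in[0,T], \] which belongs to $H^1_{,0}(0,T)$. *)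

theory Defs
  imports "HOL-Analysis.Analysis"
begin

text \<open>H^1(0,T): functions that on [0,T] are the indefinite integral of an L^2(0,T) function
  (absolutely continuous representative). g is then the (a.e. unique) weak derivative.\<close>
definition has_H1_deriv :: "real \<Rightarrow> (real \<Rightarrow> real) \<Rightarrow> (real \<Rightarrow> real) \<Rightarrow> bool" where
  "has_H1_deriv T v g \<longleftrightarrow>
     g \<in> borel_measurable lborel \<and>
     set_integrable lborel {0..T} (\<lambda>t. (g t)^2) \<and>
     (\<forall>t\<in>{0..T}. v t = v 0 + (LINT s:{0..t}|lborel. g s))"

definition H1 :: "real \<Rightarrow> (real \<Rightarrow> real) \<Rightarrow> bool" where
  "H1 T v \<longleftrightarrow> (\<exists>g. has_H1_deriv T v g)"

definition H1_0l :: "real \<Rightarrow> (real \<Rightarrow> real) \<Rightarrow> bool" where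
  "H1_0l T v \<longleftrightarrow> H1 T v \<and> v 0 = 0"

definition H1_0r :: "real \<Rightarrow> (real \<Rightarrow> real) \<Rightarrow> bool" where
  "H1_0r T v \<longleftrightarrow> H1 T v \<and> v T = 0"

text \<open>the (weak) derivative v' (a representative; all integrals below are independent of the choice)\<close>
definition dH1 :: "real \<Rightarrow> (real \<Rightarrow> real) \<Rightarrow> real \<Rightarrow> real" where
  "dH1 T v = (SOME g. has_H1_deriv T v g)"

definition b_mu :: "real \<Rightarrow> real \<Rightarrow> (real \<Rightarrow> real) \<Rightarrow> (real \<Rightarrow> real) \<Rightarrow> real" where
  "b_mu T \<mu> u v = (LINT t:{0..T}|lborel. - dH1 T u t * dH1 T v t + \<mu> * u t * v t)"

definition H1mu_norm :: "real \<Rightarrow> real \<Rightarrow> (real \<Rightarrow> real) \<Rightarrow> real" where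
  "H1mu_norm T \<mu> w = sqrt ((LINT t:{0..T}|lborel. (dH1 T w t)^2) + \<mu> * (LINT t:{0..T}|lborel. (w t)^2))"

definition T_mu :: "real \<Rightarrow> real \<Rightarrow> (real \<Rightarrow> real) \<Rightarrow> real \<Rightarrow> real" where
  "T_mu T \<mu> w t = (LINT s:{t..T}|lborel.
      cos (sqrt \<mu> * (t - s)) * dH1 T w s - sqrt \<mu> * sin (sqrt \<mu> * (t - s)) * w s)"

end

theory Submission
  imports Defs "HOL-Analysis.Analysis"
begin

definition prim :: "(real \<Rightarrow> real) \<Rightarrow> real \<Rightarrow> real" where
  "prim f t = integral\<^sup>L lborel (\<lambda>s. f s * indicator {..t} s)"

definition ACd :: "real \<Rightarrow> (real \<Rightarrow> real) \<Rightarrow> (real \<Rightarrow> real) \<Rightarrow> bool" where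
  "ACd T F f \<longleftrightarrow> integrable lborel f \<and> (\<forall>x. x \<notin> {0..T} \<longrightarrow> f x = 0) \<and>
     (\<forall>t\<in>{0..T}. F t = F 0 + prim f t)"

lemma integrable_mult_bdd:
  fixes f g :: "real \<Rightarrow> real"
  assumes "integrable lborel f" "g \<in> borel_measurable borel" "\<And>x. \<bar>g x\<bar> \<le> C"
  shows "integrable lborel (\<lambda>x. f x * g x)"
proof -
  have i: "integrable lborel (\<lambda>x. C * f x)" using assms(1) by simp
  have m: "(\<lambda>x. f x * g x) \<in> borel_measurable lborel" using assms(1,2) by measurable
  have "\<bar>f x * g x\<bar> \<le> \<bar>C * f x\<bar>" for x
  proof -
    have "\<bar>f x * g x\<bar> = \<bar>f x\<bar> * \<bar>g x\<bar>" by (simp add: abs_mult)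
    also have "\<dots> \<le> \<bar>f x\<bar> * C" by (intro mult_left_mono assms(3)) auto
    also have "\<dots> \<le> \<bar>f x\<bar> * \<bar>C\<bar>" by (intro mult_left_mono) auto
    also have "\<dots> = \<bar>C * f x\<bar>" by (simp add: abs_mult)
    finally show ?thesis .
  qed
  then have "AE x in lborel. norm (f x * g x) \<le> norm (C * f x)" by simp
  then show ?thesis using Bochner_Integration.integrable_bound[OF i m] by blast
qed

lemma prim_meas:
  assumes [measurable]: "f \<in> borel_measurable borel"
  shows "prim f \<in> borel_measurable borel"
proof -
  have *: "prim f = (\<lambda>t. integral\<^sup>L lborel (\<lambda>s. f s * (if s \<le> t then 1 else 0)))"
    unfolding prim_def by (auto simp: indicator_def of_bool_def intro!: ext)
  have [measurable]: "{p::real\<times>real. snd p \<le> fst p} \<in> sets (borel \<Otimes>\<^sub>M lborel)"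
  proof -
    have "closed {p::real\<times>real. snd p \<le> fst p}"
      by (intro closed_Collect_le continuous_intros)
    moreover have "sets (borel \<Otimes>\<^sub>M lborel) = sets (borel \<Otimes>\<^sub>M (borel::real measure))"
      by (intro sets_pair_measure_cong) auto
    ultimately show ?thesis by (metis borel_prod borel_closed)
  qed
  show ?thesis unfolding * 
    by (intro lborel.borel_measurable_lebesgue_integral) measurable
qed

lemma prim_bound:
  assumes "integrable lborel f"
  shows "\<bar>prim f t\<bar> \<le> integral\<^sup>L lborel (\<lambda>s. \<bar>f s\<bar>)"
proof -
  have "\<bar>prim f t\<bar> \<le> integral\<^sup>L lborel (\<lambda>s. \<bar>f s * indicator {..t} s\<bar>)"
    unfolding prim_def by (rule integral_abs_bound)
  also have "\<dots> \<le> integral\<^sup>L lborel (\<lambda>s. \<bar>f s\<bar>)"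
    using assms by (intro integral_mono integrable_abs integrable_real_mult_indicator)
      (auto simp: indicator_def)
  finally show ?thesis .
qed

lemma sets_le_pair: "{p::real\<times>real. snd p \<le> fst p} \<in> sets (lborel \<Otimes>\<^sub>M lborel)"
  and sets_lt_pair: "{p::real\<times>real. fst p < snd p} \<in> sets (lborel \<Otimes>\<^sub>M lborel)"
proof -
  have "closed {p::real\<times>real. snd p \<le> fst p}"
    by (intro closed_Collect_le continuous_intros)
  then show "{p::real\<times>real. snd p \<le> fst p} \<in> sets (lborel \<Otimes>\<^sub>M lborel)"
    by (metis lborel_prod sets_lborel borel_closed)
  have "open {p::real\<times>real. fst p < snd p}"
    by (intro open_Collect_less continuous_intros)
  then show "{p::real\<times>real. fst p < snd p} \<in> sets (lborel \<Otimes>\<^sub>M lborel)"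
    by (metis lborel_prod sets_lborel borel_open)
qed

lemma prim_strict:
  assumes "integrable lborel f"
  shows "integral\<^sup>L lborel (\<lambda>x. f x * indicator {..<y} x) = prim f y"
proof -
  have [measurable]: "f \<in> borel_measurable borel" using assms by auto
  show ?thesis unfolding prim_def
  by (intro integral_cong_AE) (use AE_lborel_singleton[of y] in \<open>auto elim!: eventually_mono simp: indicator_def\<close>)
qed

lemma ibp_global:
  fixes f g :: "real \<Rightarrow> real"
  assumes f: "integrable lborel f" and g: "integrable lborel g"
  shows "integral\<^sup>L lborel (\<lambda>x. f x * prim g x) + integral\<^sup>L lborel (\<lambda>x. g x * prim f x)
       = integral\<^sup>L lborel f * integral\<^sup>L lborel g"
proof -
  have [measurable]: "f \<in> borel_measurable lborel" "g \<in> borel_measurable lborel"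
    using f g by auto
  have [measurable]: "{p::real\<times>real. snd p \<le> fst p} \<in> sets (lborel \<Otimes>\<^sub>M lborel)"
     "{p::real\<times>real. fst p < snd p} \<in> sets (lborel \<Otimes>\<^sub>M lborel)"
    by (rule sets_le_pair sets_lt_pair)+
  define Q where "Q = (\<lambda>p::real\<times>real. f (fst p) * g (snd p))"
  have Qm[measurable]: "Q \<in> borel_measurable (lborel \<Otimes>\<^sub>M lborel)"
    unfolding Q_def by measurable
  have Qint: "integrable (lborel \<Otimes>\<^sub>M lborel) Q"
  proof (rule lborel_pair.Fubini_integrable[OF Qm])
    have "(\<lambda>x. \<integral>y. norm (Q (x, y)) \<partial>lborel) = (\<lambda>x. \<bar>f x\<bar> * integral\<^sup>L lborel (\<lambda>y. \<bar>g y\<bar>))"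
      by (auto simp: Q_def abs_mult intro!: ext)
    then show "integrable lborel (\<lambda>x. \<integral>y. norm (Q (x, y)) \<partial>lborel)"
      using f by simp
    show "AE x in lborel. integrable lborel (\<lambda>y. Q (x, y))"
      using g by (simp add: Q_def)
  qed
  define Q1 where "Q1 = (\<lambda>p::real\<times>real. f (fst p) * (g (snd p) * indicator {p. snd p \<le> fst p} p))"
  define Q2 where "Q2 = (\<lambda>p::real\<times>real. g (snd p) * (f (fst p) * indicator {p. fst p < snd p} p))"
  have Q1m[measurable]: "Q1 \<in> borel_measurable (lborel \<Otimes>\<^sub>M lborel)"
    unfolding Q1_def by measurable
  have Q2m[measurable]: "Q2 \<in> borel_measurable (lborel \<Otimes>\<^sub>M lborel)"
    unfolding Q2_def by measurable
  have Q1int: "integrable (lborel \<Otimes>\<^sub>M lborel) Q1"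
    by (rule Bochner_Integration.integrable_bound[OF Qint Q1m])
       (auto simp: Q1_def Q_def indicator_def abs_mult)
  have Q2int: "integrable (lborel \<Otimes>\<^sub>M lborel) Q2"
    by (rule Bochner_Integration.integrable_bound[OF Qint Q2m])
       (auto simp: Q2_def Q_def indicator_def abs_mult)
  have QQ: "Q = (\<lambda>p. Q1 p + Q2 p)"
    by (auto simp: Q_def Q1_def Q2_def indicator_def intro!: ext)
  have "integral\<^sup>L (lborel \<Otimes>\<^sub>M lborel) Q = integral\<^sup>L (lborel \<Otimes>\<^sub>M lborel) Q1 + integral\<^sup>L (lborel \<Otimes>\<^sub>M lborel) Q2"
    unfolding QQ using Q1int Q2int by simp
  moreover have "integral\<^sup>L (lborel \<Otimes>\<^sub>M lborel) Q = integral\<^sup>L lborel f * integral\<^sup>L lborel g"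
  proof -
    have "integral\<^sup>L (lborel \<Otimes>\<^sub>M lborel) Q = (\<integral>x. (\<integral>y. Q (x, y) \<partial>lborel) \<partial>lborel)"
      using lborel_pair.integral_fst'[OF Qint] by simp
    also have "\<dots> = (\<integral>x. f x * integral\<^sup>L lborel g \<partial>lborel)"
      by (simp add: Q_def)
    finally show ?thesis by simp
  qed
  moreover have "integral\<^sup>L (lborel \<Otimes>\<^sub>M lborel) Q1 = integral\<^sup>L lborel (\<lambda>x. f x * prim g x)"
  proof -
    have "integral\<^sup>L (lborel \<Otimes>\<^sub>M lborel) Q1 = (\<integral>x. (\<integral>y. Q1 (x, y) \<partial>lborel) \<partial>lborel)"
      using lborel_pair.integral_fst'[OF Q1int] by simp
    also have "\<dots> = integral\<^sup>L lborel (\<lambda>x. f x * prim g x)"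
      by (simp add: Q1_def prim_def indicator_def)
    finally show ?thesis .
  qed
  moreover have "integral\<^sup>L (lborel \<Otimes>\<^sub>M lborel) Q2 = integral\<^sup>L lborel (\<lambda>y. g y * prim f y)"
  proof -
    have Q2int': "integrable (lborel \<Otimes>\<^sub>M lborel) (\<lambda>(x, y). Q2 (x, y))" using Q2int by simp
    have "integral\<^sup>L (lborel \<Otimes>\<^sub>M lborel) Q2 = (\<integral>y. (\<integral>x. Q2 (x, y) \<partial>lborel) \<partial>lborel)"
      using lborel_pair.integral_snd[OF Q2int'] by simp
    also have "\<dots> = (\<integral>y. g y * integral\<^sup>L lborel (\<lambda>x. f x * indicator {..<y} x) \<partial>lborel)"
      by (simp add: Q2_def indicator_def)
    also have "\<dots> = integral\<^sup>L lborel (\<lambda>y. g y * prim f y)"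
      using prim_strict[OF f] by simp
    finally show ?thesis .
  qed
  ultimately show ?thesis by simp
qed

lemma prim_cong: "(\<And>x. f x = g x) \<Longrightarrow> prim f t = prim g t"
  by (simp add: prim_def)

lemma prim_add:
  assumes "integrable lborel f" "integrable lborel g"
  shows "prim (\<lambda>x. f x + g x) t = prim f t + prim g t"
proof -
  have "(\<lambda>s. (f s + g s) * indicator {..t} s) = (\<lambda>s. f s * indicator {..t} s + g s * indicator {..t} s)"
    by (auto simp: algebra_simps)
  then show ?thesis unfolding prim_def
    using assms by (simp add: integrable_real_mult_indicator)
qed

lemma prim_cmult: "prim (\<lambda>x. c * f x) t = c * prim f t"
  unfolding prim_def by (simp add: mult.assoc)

lemma prim_uminus: "prim (\<lambda>x. - f x) t = - prim f t"
  unfolding prim_def by simp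

lemma prim_at_T:
  assumes "\<forall>x. x \<notin> {0..T} \<longrightarrow> f x = 0" "T \<le> t"
  shows "prim f t = integral\<^sup>L lborel f"
  unfolding prim_def
proof (intro Bochner_Integration.integral_cong refl)
  fix x show "f x * indicator {..t} x = f x"
  proof (cases "x \<le> t")
    case False then have "x \<notin> {0..T}" using assms(2) by auto
    then show ?thesis using assms(1) by simp
  qed simp
qed

lemma prim_at_0:
  assumes "integrable lborel f" "\<forall>x. x \<notin> {0..T} \<longrightarrow> f x = 0"
  shows "prim f 0 = 0"
proof -
  have [measurable]: "f \<in> borel_measurable borel" using assms by auto
  have "AE x in lborel. f x * indicator {..0} x = 0"
    using AE_lborel_singleton[of 0]
  proof (rule eventually_mono)
    fix x :: real assume "x \<noteq> 0" then show "f x * indicator {..0} x = 0"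
      using assms(2) by (cases "x < 0") (auto simp: indicator_def)
  qed
  then show ?thesis unfolding prim_def by (rule integral_eq_zero_AE)
qed

lemma ACdD:
  assumes "ACd T F f"
  shows "integrable lborel f" "\<And>x. x \<notin> {0..T} \<Longrightarrow> f x = 0" "\<And>t. t \<in> {0..T} \<Longrightarrow> F t = F 0 + prim f t"
  using assms unfolding ACd_def by blast+

lemma ACd_meas:
  assumes "ACd T F f"
  shows "(\<lambda>t. F 0 + prim f t) \<in> borel_measurable borel"
proof -
  have fm: "f \<in> borel_measurable borel" using ACdD(1)[OF assms] by auto
  have [measurable]: "prim f \<in> borel_measurable borel" by (rule prim_meas[OF fm])
  show ?thesis by measurable
qed

lemma ACd_bound:
  assumes "ACd T F f"
  shows "\<bar>F 0 + prim f t\<bar> \<le> \<bar>F 0\<bar> + integral\<^sup>L lborel (\<lambda>s. \<bar>f s\<bar>)"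
  using prim_bound[OF ACdD(1)[OF assms], of t] by linarith

lemma ACd_integrable_mult:
  assumes "ACd T G g" "integrable lborel f" "\<forall>x. x \<notin> {0..T} \<longrightarrow> f x = 0"
  shows "integrable lborel (\<lambda>x. f x * G x)"
proof -
  have "integrable lborel (\<lambda>x. f x * (G 0 + prim g x))"
    by (rule integrable_mult_bdd[OF assms(2) ACd_meas[OF assms(1)] ACd_bound[OF assms(1)]])
  moreover have "(\<lambda>x. f x * (G 0 + prim g x)) = (\<lambda>x. f x * G x)"
  proof
    fix x show "f x * (G 0 + prim g x) = f x * G x"
      using assms(3) ACdD(3)[OF assms(1), of x] by (cases "x \<in> {0..T}") simp_all
  qed
  ultimately show ?thesis by simp
qed

lemma ACd_integrable_prod:
  assumes "ACd T F f" "ACd T G g"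
  shows "integrable lborel (\<lambda>x. F x * G x * indicator {0..T} x)"
proof -
  have "integrable lborel (\<lambda>x. indicator {0..T} x * ((F 0 + prim f x) * (G 0 + prim g x)))"
  proof (rule integrable_mult_bdd)
    show "integrable lborel (indicat_real {0..T})" using borel_integrable_atLeastAtMost[of 0 T "\<lambda>_. 1"] by simp
    show "(\<lambda>x. (F 0 + prim f x) * (G 0 + prim g x)) \<in> borel_measurable borel"
      using ACd_meas[OF assms(1)] ACd_meas[OF assms(2)] by measurable
    show "\<bar>(F 0 + prim f x) * (G 0 + prim g x)\<bar> \<le> (\<bar>F 0\<bar> + integral\<^sup>L lborel (\<lambda>s. \<bar>f s\<bar>)) * (\<bar>G 0\<bar> + integral\<^sup>L lborel (\<lambda>s. \<bar>g s\<bar>))" for x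
      unfolding abs_mult by (intro mult_mono ACd_bound[OF assms(1)] ACd_bound[OF assms(2)]) auto
  qed
  moreover have "(\<lambda>x. indicator {0..T} x * ((F 0 + prim f x) * (G 0 + prim g x))) = (\<lambda>x. F x * G x * indicator {0..T} x)"
  proof
    fix x show "indicator {0..T} x * ((F 0 + prim f x) * (G 0 + prim g x)) = F x * G x * indicator {0..T} x"
      using ACdD(3)[OF assms(1), of x] ACdD(3)[OF assms(2), of x] by (cases "x \<in> {0..T}") simp_all
  qed
  ultimately show ?thesis by simp
qed

lemma ACd_add:
  assumes "ACd T F f" "ACd T G g"
  shows "ACd T (\<lambda>t. F t + G t) (\<lambda>s. f s + g s)"
  unfolding ACd_def
proof (intro conjI ballI allI impI)
  show "integrable lborel (\<lambda>s. f s + g s)" using ACdD(1)[OF assms(1)] ACdD(1)[OF assms(2)] by simp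
  show "f x + g x = 0" if "x \<notin> {0..T}" for x using that ACdD(2)[OF assms(1)] ACdD(2)[OF assms(2)] by simp
  fix t assume t: "t \<in> {0..T}"
  show "F t + G t = F 0 + G 0 + prim (\<lambda>s. f s + g s) t"
    using ACdD(3)[OF assms(1) t] ACdD(3)[OF assms(2) t] prim_add[OF ACdD(1)[OF assms(1)] ACdD(1)[OF assms(2)]]
    by simp
qed

lemma ACd_cmult:
  assumes "ACd T F f"
  shows "ACd T (\<lambda>t. c * F t) (\<lambda>s. c * f s)"
proof -
  have i: "integrable lborel (\<lambda>s. c * f s)" using ACdD(1)[OF assms(1)] by simp
  have z: "\<forall>x. x \<notin> {0..T} \<longrightarrow> c * f x = 0" using ACdD(2)[OF assms(1)] by simp
  have v: "\<forall>t\<in>{0..T}. c * F t = c * F 0 + prim (\<lambda>s. c * f s) t"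
  proof
    fix t assume t: "t \<in> {0..T}"
    have "F t = F 0 + prim f t" by (rule ACdD(3)[OF assms(1) t])
    then have "c * F t = c * (F 0 + prim f t)" by (rule arg_cong)
    also have "\<dots> = c * F 0 + prim (\<lambda>s. c * f s) t" unfolding prim_cmult by (rule distrib_left)
    finally show "c * F t = c * F 0 + prim (\<lambda>s. c * f s) t" .
  qed
  show ?thesis unfolding ACd_def using i z v by blast
qed

lemma ACd_cong:
  assumes "ACd T F f" "\<And>t. t \<in> {0..T} \<Longrightarrow> F' t = F t" "\<And>s. f' s = f s" "0 \<le> T"
  shows "ACd T F' f'"
proof -
  have ff: "f' = f" using assms(3) by (rule ext)
  have F0: "F' 0 = F 0" using assms(2,4) by simp
  have i: "integrable lborel f'" unfolding ff by (rule ACdD(1)[OF assms(1)])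
  have z: "\<forall>x. x \<notin> {0..T} \<longrightarrow> f' x = 0" unfolding ff using ACdD(2)[OF assms(1)] by blast
  have v: "\<forall>t\<in>{0..T}. F' t = F' 0 + prim f' t"
  proof
    fix t assume t: "t \<in> {0..T}"
    have "F t = F 0 + prim f t" by (rule ACdD(3)[OF assms(1) t])
    then show "F' t = F' 0 + prim f' t" unfolding ff F0 assms(2)[OF t] .
  qed
  show ?thesis unfolding ACd_def using i z v by blast
qed

lemma ACd_mult:
  assumes F: "ACd T F f" and G: "ACd T G g"
  shows "ACd T (\<lambda>t. F t * G t) (\<lambda>s. f s * G s + F s * g s)"
proof -
  note fi = ACdD(1)[OF F] and gi = ACdD(1)[OF G]
  note fs = ACdD(2)[OF F] and gs = ACdD(2)[OF G]
  have i1: "integrable lborel (\<lambda>s. f s * G s)"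
    by (rule ACd_integrable_mult[OF G fi]) (use fs in auto)
  have i2: "integrable lborel (\<lambda>s. F s * g s)"
    using ACd_integrable_mult[OF F gi] gs by (simp add: mult.commute)
  have i1': "integrable lborel (\<lambda>s. f s * prim g s)"
    by (rule integrable_mult_bdd[OF fi prim_meas prim_bound[OF gi]]) (use gi in auto)
  have i2': "integrable lborel (\<lambda>s. g s * prim f s)"
    by (rule integrable_mult_bdd[OF gi prim_meas prim_bound[OF fi]]) (use fi in auto)
  have key: "F t * G t = F 0 * G 0 + prim (\<lambda>s. f s * G s + F s * g s) t" if t: "t \<in> {0..T}" for t
  proof -
    define ft where "ft = (\<lambda>x. f x * indicator {..t} x)"
    define gt where "gt = (\<lambda>x. g x * indicator {..t} x)"
    have fti: "integrable lborel ft" unfolding ft_def using fi by (rule integrable_real_mult_indicator[rotated]) simp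
    have gti: "integrable lborel gt" unfolding gt_def using gi by (rule integrable_real_mult_indicator[rotated]) simp
    have pg: "prim gt x = prim g x" if "x \<le> t" for x
      unfolding prim_def gt_def using that by (intro Bochner_Integration.integral_cong) (auto simp: indicator_def)
    have pf: "prim ft x = prim f x" if "x \<le> t" for x
      unfolding prim_def ft_def using that by (intro Bochner_Integration.integral_cong) (auto simp: indicator_def)
    have e1: "integral\<^sup>L lborel (\<lambda>x. ft x * prim gt x) = prim (\<lambda>x. f x * prim g x) t"
      unfolding prim_def[of "\<lambda>x. f x * prim g x" t]
    proof (rule Bochner_Integration.integral_cong[OF refl])
      fix x show "ft x * prim gt x = f x * prim g x * indicator {..t} x"
        using pg[of x] by (cases "x \<le> t") (simp_all add: ft_def)
    qed
    have e2: "integral\<^sup>L lborel (\<lambda>x. gt x * prim ft x) = prim (\<lambda>x. g x * prim f x) t"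
      unfolding prim_def[of "\<lambda>x. g x * prim f x" t]
    proof (rule Bochner_Integration.integral_cong[OF refl])
      fix x show "gt x * prim ft x = g x * prim f x * indicator {..t} x"
        using pf[of x] by (cases "x \<le> t") (simp_all add: gt_def)
    qed
    have ibp: "prim (\<lambda>x. f x * prim g x) t + prim (\<lambda>x. g x * prim f x) t = prim f t * prim g t"
      using ibp_global[OF fti gti] unfolding e1 e2 by (simp add: prim_def ft_def gt_def)
    have "prim (\<lambda>s. f s * G s + F s * g s) t
        = prim (\<lambda>s. (G 0 * f s + f s * prim g s) + (F 0 * g s + g s * prim f s)) t"
    proof (rule prim_cong)
      fix s show "f s * G s + F s * g s = (G 0 * f s + f s * prim g s) + (F 0 * g s + g s * prim f s)"
      proof (cases "s \<in> {0..T}")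
        case True then show ?thesis using ACdD(3)[OF F True] ACdD(3)[OF G True] by (simp add: algebra_simps)
      next
        case False then show ?thesis using fs gs by simp
      qed
    qed
    also have "\<dots> = G 0 * prim f t + prim (\<lambda>x. f x * prim g x) t + (F 0 * prim g t + prim (\<lambda>x. g x * prim f x) t)"
      using fi gi i1' i2' by (simp add: prim_add prim_cmult)
    finally have "prim (\<lambda>s. f s * G s + F s * g s) t = G 0 * prim f t + F 0 * prim g t + prim f t * prim g t"
      using ibp by simp
    moreover have "F t * G t = (F 0 + prim f t) * (G 0 + prim g t)"
      using ACdD(3)[OF F t] ACdD(3)[OF G t] by simp
    ultimately show ?thesis by (simp add: algebra_simps)
  qed
  show ?thesis unfolding ACd_def
  proof (intro conjI ballI allI impI)
    show "integrable lborel (\<lambda>s. f s * G s + F s * g s)" using i1 i2 by simp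
    show "f x * G x + F x * g x = 0" if "x \<notin> {0..T}" for x using fs gs that by simp
    show "F t * G t = F 0 * G 0 + prim (\<lambda>s. f s * G s + F s * g s) t" if "t \<in> {0..T}" for t
      by (rule key[OF that])
  qed
qed

lemma ACd_smooth:
  assumes d: "\<And>x. (\<phi> has_real_derivative \<phi>' x) (at x)" and c: "\<And>x. isCont \<phi>' x"
  shows "ACd T \<phi> (\<lambda>s. \<phi>' s * indicator {0..T} s)"
  unfolding ACd_def
proof (intro conjI ballI allI impI)
  show "integrable lborel (\<lambda>s. \<phi>' s * indicator {0..T} s)"
    using c by (intro borel_integrable_atLeastAtMost) auto
  show "\<phi>' x * indicator {0..T} x = 0" if "x \<notin> {0..T}" for x using that by simp
  fix t assume t: "t \<in> {0..T}"
  have "prim (\<lambda>s. \<phi>' s * indicator {0..T} s) t = integral\<^sup>L lborel (\<lambda>s. \<phi>' s * indicator {0..t} s)"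
    unfolding prim_def using t by (intro Bochner_Integration.integral_cong) (auto simp: indicator_def)
  also have "\<dots> = \<phi> t - \<phi> 0"
    using t by (intro integral_FTC_Icc_real d c) auto
  finally show "\<phi> t = \<phi> 0 + prim (\<lambda>s. \<phi>' s * indicator {0..T} s) t" by simp
qed

lemma ACd_tail:
  assumes ai: "integrable lborel a" and as: "\<forall>x. x \<notin> {0..T} \<longrightarrow> a x = 0"
  shows "ACd T (\<lambda>t. integral\<^sup>L lborel (\<lambda>s. indicator {t..T} s * a s)) (\<lambda>s. - a s)"
  unfolding ACd_def
proof (intro conjI ballI allI impI)
  show "integrable lborel (\<lambda>s. - a s)" using ai by simp
  show "- a x = 0" if "x \<notin> {0..T}" for x using that as by simp
  fix t assume t: "t \<in> {0..T}"
  have "integral\<^sup>L lborel (\<lambda>s. indicator {t..T} s * a s) = integral\<^sup>L lborel (\<lambda>s. a s - a s * indicator {..<t} s)"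
    using t as by (intro Bochner_Integration.integral_cong) (auto simp: indicator_def)
  also have "\<dots> = integral\<^sup>L lborel a - prim a t"
    using ai prim_strict[OF ai, of t] by (simp add: integrable_real_mult_indicator)
  finally have 1: "integral\<^sup>L lborel (\<lambda>s. indicator {t..T} s * a s) = integral\<^sup>L lborel a - prim a t" .
  have 2: "integral\<^sup>L lborel (\<lambda>s. indicator {0..T} s * a s) = integral\<^sup>L lborel a"
    using as by (intro Bochner_Integration.integral_cong) (auto simp: indicator_def)
  show "integral\<^sup>L lborel (\<lambda>s. indicator {t..T} s * a s) =
         integral\<^sup>L lborel (\<lambda>s. indicator {0..T} s * a s) + prim (\<lambda>s. - a s) t"
    using 1 2 by (simp add: prim_uminus)
qed

lemma prim_zero_all:
  assumes F: "ACd T F f" and G: "ACd T F g" and T: "0 \<le> T"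
  shows "prim (\<lambda>x. f x - g x) t = 0"
proof -
  note fi = ACdD(1)[OF F] and gi = ACdD(1)[OF G]
  have hi: "integrable lborel (\<lambda>x. f x - g x)" using fi gi by simp
  have hs: "\<forall>x. x \<notin> {0..T} \<longrightarrow> f x - g x = 0" using ACdD(2)[OF F] ACdD(2)[OF G] by simp
  have pd: "prim (\<lambda>x. f x - g x) s = prim f s - prim g s" for s
    using prim_add[OF fi, of "\<lambda>x. - g x" s] gi by (simp add: prim_uminus)
  have inside: "prim (\<lambda>x. f x - g x) s = 0" if s: "s \<in> {0..T}" for s
  proof -
    have "F s = F 0 + prim f s" by (rule ACdD(3)[OF F s])
    moreover have "F s = F 0 + prim g s" by (rule ACdD(3)[OF G s])
    ultimately show ?thesis unfolding pd by simp
  qed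
  show ?thesis
  proof (cases "t < 0")
    case True
    have z: "(f x - g x) * indicator {..t} x = 0" for x
      using hs True by (cases "x \<le> t") (auto simp: indicator_def)
    show ?thesis unfolding prim_def z by simp
  next
    case False
    show ?thesis
    proof (cases "t \<le> T")
      case True then show ?thesis using False inside by simp
    next
      case False
      then have "prim (\<lambda>x. f x - g x) t = prim (\<lambda>x. f x - g x) T"
        using prim_at_T[OF hs] by simp
      then show ?thesis using inside T by simp
    qed
  qed
qed

lemma ACd_unique:
  assumes F: "ACd T F f" and G: "ACd T F g" and T: "0 \<le> T"
  shows "AE x in lborel. f x = g x"
proof -
  define h where "h = (\<lambda>x. f x - g x)"
  have hi: "integrable lborel h" unfolding h_def using ACdD(1)[OF F] ACdD(1)[OF G] by simp
  have hm[measurable]: "h \<in> borel_measurable borel" using hi by auto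
  have p0: "prim h t = 0" for t unfolding h_def by (rule prim_zero_all[OF F G T])
  have hs: "\<forall>x. x \<notin> {0..T} \<longrightarrow> h x = 0" unfolding h_def using ACdD(2)[OF F] ACdD(2)[OF G] by simp
  have tot: "integral\<^sup>L lborel h = 0" using prim_at_T[OF hs, of T] p0[of T] by simp
  define hp where "hp = (\<lambda>x. max 0 (h x))"
  define hn where "hn = (\<lambda>x. max 0 (- h x))"
  have hpi: "integrable lborel hp" unfolding hp_def using hi by auto
  have hni: "integrable lborel hn" unfolding hn_def using hi by auto
  have [measurable]: "hp \<in> borel_measurable borel" "hn \<in> borel_measurable borel" unfolding hp_def hn_def by measurable
  have hph: "h x = hp x - hn x" for x unfolding hp_def hn_def by auto
  have eqI: "integral\<^sup>L lborel (\<lambda>y. hp y * indicator {x<..} y) = integral\<^sup>L lborel (\<lambda>y. hn y * indicator {x<..} y)" for x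
  proof -
    have "integral\<^sup>L lborel (\<lambda>y. h y * indicator {x<..} y) = integral\<^sup>L lborel (\<lambda>y. h y - h y * indicator {..x} y)"
      by (rule Bochner_Integration.integral_cong[OF refl]) (auto simp: indicator_def)
    also have "\<dots> = integral\<^sup>L lborel h - prim h x"
      unfolding prim_def using hi by (simp add: integrable_real_mult_indicator)
    also have "\<dots> = 0" using tot p0 by simp
    finally have "integral\<^sup>L lborel (\<lambda>y. h y * indicator {x<..} y) = 0" .
    moreover have "integral\<^sup>L lborel (\<lambda>y. h y * indicator {x<..} y) =
        integral\<^sup>L lborel (\<lambda>y. hp y * indicator {x<..} y) - integral\<^sup>L lborel (\<lambda>y. hn y * indicator {x<..} y)"
    proof -
      have "(\<lambda>y. h y * indicator {x<..} y) = (\<lambda>y. hp y * indicator {x<..} y - hn y * indicator {x<..} y)"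
        by (auto simp: hph algebra_simps)
      then show ?thesis using hpi hni by (simp add: integrable_real_mult_indicator)
    qed
    ultimately show ?thesis by simp
  qed
  have em: "emeasure (density lborel (\<lambda>y. ennreal (k y))) {x<..} = ennreal (integral\<^sup>L lborel (\<lambda>y. k y * indicator {x<..} y))"
    if ki: "integrable lborel k" and kn: "\<And>y. 0 \<le> k y" for k :: "real \<Rightarrow> real" and x :: real
  proof -
    have [measurable]: "k \<in> borel_measurable borel" using ki by auto
    have "emeasure (density lborel (\<lambda>y. ennreal (k y))) {x<..} = (\<integral>\<^sup>+ y. ennreal (k y) * indicator {x<..} y \<partial>lborel)"
    proof (rule emeasure_density)
      show "{x<..} \<in> sets lborel" using borel_open[OF open_greaterThan[of x]] by simp
    qed simp
    also have "\<dots> = (\<integral>\<^sup>+ y. ennreal (k y * indicator {x<..} y) \<partial>lborel)"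
      by (rule nn_integral_cong) (auto simp: indicator_def)
    also have "\<dots> = ennreal (integral\<^sup>L lborel (\<lambda>y. k y * indicator {x<..} y))"
      by (rule nn_integral_eq_integral) (use ki kn in \<open>auto simp: integrable_real_mult_indicator\<close>)
    finally show ?thesis .
  qed
  have hpn: "0 \<le> hp y" "0 \<le> hn y" for y unfolding hp_def hn_def by auto
  have "density lborel (\<lambda>y. ennreal (hp y)) = density lborel (\<lambda>y. ennreal (hn y))"
  proof (rule measure_eqI_lessThan)
    show "sets (density lborel (\<lambda>y. ennreal (hp y))) = sets borel" by simp
    show "sets (density lborel (\<lambda>y. ennreal (hn y))) = sets borel" by simp
    show "emeasure (density lborel (\<lambda>y. ennreal (hp y))) {x<..} < \<infinity>" for x
      using em[OF hpi hpn(1)] by simp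
    show "emeasure (density lborel (\<lambda>y. ennreal (hp y))) {x<..} = emeasure (density lborel (\<lambda>y. ennreal (hn y))) {x<..}" for x
      using em[OF hpi hpn(1)] em[OF hni hpn(2)] eqI by simp
  qed
  then have "AE y in lborel. ennreal (hp y) = ennreal (hn y)"
    by (intro sigma_finite_measure.density_unique[OF sigma_finite_lborel]) auto
  then show ?thesis
  proof (rule eventually_mono)
    fix y assume "ennreal (hp y) = ennreal (hn y)"
    then have "hp y = hn y" using hpn by simp
    then show "f y = g y" using hph[of y] unfolding h_def by simp
  qed
qed

lemma H1_deriv:
  assumes "H1 T v" shows "has_H1_deriv T v (dH1 T v)"
  using assms unfolding H1_def dH1_def by (rule someI_ex)

lemma abs_le_sq1: "\<bar>y::real\<bar> \<le> y^2 + 1"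
proof -
  have "0 \<le> (\<bar>y\<bar> - 1)^2" by simp
  then have "0 \<le> \<bar>y\<bar>^2 - 2 * \<bar>y\<bar> + 1" by (simp add: power2_diff)
  then have "2 * \<bar>y\<bar> \<le> y^2 + 1" by simp
  moreover have "0 \<le> y^2" by simp
  ultimately show ?thesis by linarith
qed

lemma abs_mult_le_sq: "\<bar>a * b::real\<bar> \<le> a^2 + b^2"
proof -
  have "0 \<le> (\<bar>a\<bar> - \<bar>b\<bar>)^2" by simp
  then have "2 * (\<bar>a\<bar> * \<bar>b\<bar>) \<le> a^2 + b^2" by (simp add: power2_diff)
  moreover have "0 \<le> \<bar>a\<bar> * \<bar>b\<bar>" "0 \<le> a^2" "0 \<le> b^2" by simp_all
  ultimately show ?thesis unfolding abs_mult by linarith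
qed

lemma H1_sq_int:
  assumes "has_H1_deriv T v g"
  shows "integrable lborel (\<lambda>x. (g x)^2 * indicator {0..T} x)"
  using assms unfolding has_H1_deriv_def set_integrable_def by (simp add: mult.commute)

lemma H1_meas:
  assumes "has_H1_deriv T v g"
  shows "g \<in> borel_measurable borel"
  using assms unfolding has_H1_deriv_def by simp

lemma H1_int:
  assumes g: "has_H1_deriv T v g" and T: "0 \<le> T"
  shows "integrable lborel (\<lambda>x. g x * indicator {0..T} x)"
proof -
  have [measurable]: "g \<in> borel_measurable borel" by (rule H1_meas[OF g])
  have i: "integrable lborel (\<lambda>x. (g x)^2 * indicator {0..T} x + indicator {0..T} x)"
    using H1_sq_int[OF g] borel_integrable_atLeastAtMost[of 0 T "\<lambda>_. 1"] by simp
  show ?thesis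
  proof (rule Bochner_Integration.integrable_bound[OF i])
    show "(\<lambda>x. g x * indicator {0..T} x) \<in> borel_measurable lborel" by measurable
    show "AE x in lborel. norm (g x * indicator {0..T} x) \<le> norm ((g x)^2 * indicator {0..T} x + indicator {0..T} x)"
      using abs_le_sq1 by (auto simp: indicator_def)
  qed
qed

lemma H1_prod_int:
  assumes g1: "has_H1_deriv T v1 g1" and g2: "has_H1_deriv T v2 g2"
  shows "integrable lborel (\<lambda>x. (g1 x * indicator {0..T} x) * (g2 x * indicator {0..T} x))"
proof -
  have [measurable]: "g1 \<in> borel_measurable borel" "g2 \<in> borel_measurable borel"
    by (rule H1_meas[OF g1], rule H1_meas[OF g2])
  have i: "integrable lborel (\<lambda>x. (g1 x)^2 * indicator {0..T} x + (g2 x)^2 * indicator {0..T} x)"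
    using H1_sq_int[OF g1] H1_sq_int[OF g2] by simp
  show ?thesis
  proof (rule Bochner_Integration.integrable_bound[OF i])
    show "(\<lambda>x. (g1 x * indicator {0..T} x) * (g2 x * indicator {0..T} x)) \<in> borel_measurable lborel" by measurable
    show "AE x in lborel. norm ((g1 x * indicator {0..T} x) * (g2 x * indicator {0..T} x)) \<le> norm ((g1 x)^2 * indicator {0..T} x + (g2 x)^2 * indicator {0..T} x)"
      using abs_mult_le_sq by (auto simp: indicator_def)
  qed
qed

lemma H1_ACd:
  assumes g: "has_H1_deriv T v g" and T: "0 \<le> T"
  shows "ACd T v (\<lambda>s. g s * indicator {0..T} s)"
  unfolding ACd_def
proof (intro conjI ballI allI impI)
  show "integrable lborel (\<lambda>s. g s * indicator {0..T} s)" by (rule H1_int[OF g T])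
  show "g x * indicator {0..T} x = 0" if "x \<notin> {0..T}" for x using that by simp
  fix t assume t: "t \<in> {0..T}"
  have "v t = v 0 + (LINT s:{0..t}|lborel. g s)" using g t unfolding has_H1_deriv_def by blast
  also have "(LINT s:{0..t}|lborel. g s) = prim (\<lambda>s. g s * indicator {0..T} s) t"
    unfolding set_lebesgue_integral_def prim_def using t
    by (intro Bochner_Integration.integral_cong) (auto simp: indicator_def)
  finally show "v t = v 0 + prim (\<lambda>s. g s * indicator {0..T} s) t" .
qed

lemma ACd_H1:
  assumes F: "ACd T F f" and sq: "integrable lborel (\<lambda>x. (f x)^2 * indicator {0..T} x)"
  shows "has_H1_deriv T F f"
  unfolding has_H1_deriv_def
proof (intro conjI ballI)
  show "f \<in> borel_measurable lborel" using ACdD(1)[OF F] by auto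
  show "set_integrable lborel {0..T} (\<lambda>t. (f t)\<^sup>2)"
    unfolding set_integrable_def using sq by (simp add: mult.commute)
  fix t assume t: "t \<in> {0..T}"
  have "(LINT s:{0..t}|lborel. f s) = prim f t"
    unfolding set_lebesgue_integral_def prim_def using t ACdD(2)[OF F]
    by (intro Bochner_Integration.integral_cong) (auto simp: indicator_def)
  then show "F t = F 0 + (LINT s:{0..t}|lborel. f s)" using ACdD(3)[OF F t] by simp
qed

lemma tail_bound:
  fixes a :: "real \<Rightarrow> real"
  assumes "integrable lborel a"
  shows "\<bar>integral\<^sup>L lborel (\<lambda>s. indicator {t..T} s * a s)\<bar> \<le> integral\<^sup>L lborel (\<lambda>s. \<bar>a s\<bar>)"
proof -
  have ii: "integrable lborel (\<lambda>s. indicator {t..T} s * a s)"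
    using integrable_mult_indicator[of "{t..T}" lborel a] assms by simp
  have "\<bar>integral\<^sup>L lborel (\<lambda>s. indicator {t..T} s * a s)\<bar> \<le> integral\<^sup>L lborel (\<lambda>s. \<bar>indicator {t..T} s * a s\<bar>)"
    by (rule integral_abs_bound)
  also have "\<dots> \<le> integral\<^sup>L lborel (\<lambda>s. \<bar>a s\<bar>)"
    using assms ii by (intro integral_mono) (auto simp: indicator_def)
  finally show ?thesis .
qed

lemma integrable_mult_bdd':
  fixes f g :: "real \<Rightarrow> real"
  assumes "integrable lborel f" "g \<in> borel_measurable borel" "\<And>x. \<bar>g x\<bar> \<le> C"
  shows "integrable lborel (\<lambda>x. g x * f x)"
  using integrable_mult_bdd[OF assms] by (simp add: mult.commute)

lemma ACd_cos:
  "ACd T (\<lambda>t. cos (k * t)) (\<lambda>s. (- k * sin (k * s)) * indicator {0..T} s)"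
proof (rule ACd_smooth)
  fix x show "((\<lambda>t. cos (k * t)) has_real_derivative (- k * sin (k * x))) (at x)"
    by (auto intro!: derivative_eq_intros)
  show "isCont (\<lambda>x. - k * sin (k * x)) x" by (intro continuous_intros)
qed

lemma ACd_sin:
  "ACd T (\<lambda>t. sin (k * t)) (\<lambda>s. (k * cos (k * s)) * indicator {0..T} s)"
proof (rule ACd_smooth)
  fix x show "((\<lambda>t. sin (k * t)) has_real_derivative (k * cos (k * x))) (at x)"
    by (auto intro!: derivative_eq_intros)
  show "isCont (\<lambda>x. k * cos (k * x)) x" by (intro continuous_intros)
qed

lemma ACd_one: "ACd T (\<lambda>_. 1) (\<lambda>_. 0)"
  unfolding ACd_def prim_def by simp

lemma trig1: "c * (c * g + k * (sn * W)) + sn * (sn * g - k * (c * W)) = (c * c + sn * sn) * (g::real)"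
  by (simp add: algebra_simps)

lemma trig2: "sn * (c * g + k * (sn * W)) - c * (sn * g - k * (c * W)) = (c * c + sn * sn) * (k * (W::real))"
  by (simp add: algebra_simps)

lemma main_eq:
  fixes T \<mu> :: real and u w :: "real \<Rightarrow> real"
  assumes T: "T > 0" and mu: "\<mu> > 0" and u: "H1_0l T u" and w: "H1_0l T w"
  shows "b_mu T \<mu> u (T_mu T \<mu> w) =
     (LINT t:{0..T}|lborel. dH1 T u t * dH1 T w t) + \<mu> * (LINT t:{0..T}|lborel. u t * w t)"
proof -
  have T0: "0 \<le> T" using T by simp
  have u0: "u 0 = 0" and hu: "has_H1_deriv T u (dH1 T u)"
    using u unfolding H1_0l_def by (auto intro: H1_deriv)
  have w0: "w 0 = 0" and hw: "has_H1_deriv T w (dH1 T w)"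
    using w unfolding H1_0l_def by (auto intro: H1_deriv)
  define gu where "gu = dH1 T u"
  define gw where "gw = dH1 T w"
  define gu' where "gu' = (\<lambda>s. gu s * indicator {0..T} s)"
  define gw' where "gw' = (\<lambda>s. gw s * indicator {0..T} s)"
  have Au: "ACd T u gu'" unfolding gu'_def gu_def by (rule H1_ACd[OF hu T0])
  have Aw: "ACd T w gw'" unfolding gw'_def gw_def by (rule H1_ACd[OF hw T0])
  have gui: "integrable lborel gu'" and gwi: "integrable lborel gw'"
    using ACdD(1)[OF Au] ACdD(1)[OF Aw] .
  have [measurable]: "gu' \<in> borel_measurable borel" "gw' \<in> borel_measurable borel"
    using gui gwi by auto
  define k where "k = sqrt \<mu>"
  have k0: "0 \<le> k" unfolding k_def using less_imp_le[OF mu] by simp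
  have kk: "k * k = \<mu>" unfolding k_def using less_imp_le[OF mu] by simp
  define W where "W = (\<lambda>s. w s * indicator {0..T} s)"
  have Wi: "integrable lborel W"
    using ACd_integrable_prod[OF Aw ACd_one] unfolding W_def by simp
  have [measurable]: "W \<in> borel_measurable borel" using Wi by auto
  define a where "a = (\<lambda>s. cos (k * s) * gw' s + k * (sin (k * s) * W s))"
  define b where "b = (\<lambda>s. sin (k * s) * gw' s - k * (cos (k * s) * W s))"
  have ai: "integrable lborel a" unfolding a_def
    by (intro Bochner_Integration.integrable_add integrable_mult_right integrable_mult_bdd'[OF gwi, where C=1]
        integrable_mult_bdd'[OF Wi, where C=1]) auto
  have bi: "integrable lborel b" unfolding b_def
    by (intro Bochner_Integration.integrable_diff integrable_mult_right integrable_mult_bdd'[OF gwi, where C=1]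
        integrable_mult_bdd'[OF Wi, where C=1]) auto
  have as: "\<forall>x. x \<notin> {0..T} \<longrightarrow> a x = 0" by (simp add: a_def gw'_def W_def)
  have bs: "\<forall>x. x \<notin> {0..T} \<longrightarrow> b x = 0" by (simp add: b_def gw'_def W_def)
  define A where "A = (\<lambda>t. integral\<^sup>L lborel (\<lambda>s. indicator {t..T} s * a s))"
  define B where "B = (\<lambda>t. integral\<^sup>L lborel (\<lambda>s. indicator {t..T} s * b s))"
  have AA: "ACd T A (\<lambda>s. - a s)" unfolding A_def by (rule ACd_tail[OF ai as])
  have AB: "ACd T B (\<lambda>s. - b s)" unfolding B_def by (rule ACd_tail[OF bi bs])
  have Abd: "\<bar>A t\<bar> \<le> integral\<^sup>L lborel (\<lambda>s. \<bar>a s\<bar>)" for t unfolding A_def by (rule tail_bound[OF ai])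
  have Bbd: "\<bar>B t\<bar> \<le> integral\<^sup>L lborel (\<lambda>s. \<bar>b s\<bar>)" for t unfolding B_def by (rule tail_bound[OF bi])
  have cs: "cos (k * s) * a s + sin (k * s) * b s = gw' s" for s
    unfolding a_def b_def trig1 sin_cos_squared_add3 by simp
  have sc: "sin (k * s) * a s - cos (k * s) * b s = k * W s" for s
    unfolding a_def b_def trig2 sin_cos_squared_add3 by simp
  define Z where "Z = (\<lambda>t. cos (k * t) * A t + sin (k * t) * B t)"
  define Hh where "Hh = (\<lambda>s. k * (cos (k * s) * B s - sin (k * s) * A s) * indicator {0..T} s)"
  define DZ where "DZ = (\<lambda>s. - gw' s + Hh s)"
  have AZ: "ACd T Z DZ"
  proof -
    have "ACd T Z (\<lambda>s. ((- k * sin (k * s)) * indicator {0..T} s) * A s + cos (k * s) * (- a s)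
        + (((k * cos (k * s)) * indicator {0..T} s) * B s + sin (k * s) * (- b s)))"
      unfolding Z_def by (rule ACd_add[OF ACd_mult[OF ACd_cos AA] ACd_mult[OF ACd_sin AB]])
    then show ?thesis
    proof (rule ACd_cong)
      fix s
      have "((- k * sin (k * s)) * indicator {0..T} s) * A s + cos (k * s) * (- a s)
        + (((k * cos (k * s)) * indicator {0..T} s) * B s + sin (k * s) * (- b s))
        = Hh s - (cos (k * s) * a s + sin (k * s) * b s)"
        by (simp add: Hh_def algebra_simps)
      then show "DZ s = ((- k * sin (k * s)) * indicator {0..T} s) * A s + cos (k * s) * (- a s)
        + (((k * cos (k * s)) * indicator {0..T} s) * B s + sin (k * s) * (- b s))"
        unfolding cs DZ_def by simp
    qed (use T0 in auto)
  qed
  have zZ: "T_mu T \<mu> w t = Z t" if t: "t \<in> {0..T}" for t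
  proof -
    have "T_mu T \<mu> w t = integral\<^sup>L lborel (\<lambda>s. indicator {t..T} s * (cos (k * t) * a s + sin (k * t) * b s))"
      unfolding T_mu_def set_lebesgue_integral_def k_def[symmetric]
    proof (rule Bochner_Integration.integral_cong[OF refl])
      fix s
      show "indicator {t..T} s *\<^sub>R (cos (k * (t - s)) * dH1 T w s - k * sin (k * (t - s)) * w s) =
         indicator {t..T} s * (cos (k * t) * a s + sin (k * t) * b s)"
      proof (cases "s \<in> {t..T}")
        case True
        then have "s \<in> {0..T}" using t by auto
        then have "cos (k * t) * a s + sin (k * t) * b s = cos (k * (t - s)) * gw s - k * sin (k * (t - s)) * w s"
          by (simp add: a_def b_def gw'_def W_def right_diff_distrib cos_diff sin_diff algebra_simps)
        then show ?thesis using True by (simp add: gw_def)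
      qed simp
    qed
    also have "\<dots> = cos (k * t) * A t + sin (k * t) * B t"
    proof -
      have ia: "integrable lborel (\<lambda>s. indicator {t..T} s * a s)"
        using integrable_mult_indicator[of "{t..T}" lborel a] ai by simp
      have ib: "integrable lborel (\<lambda>s. indicator {t..T} s * b s)"
        using integrable_mult_indicator[of "{t..T}" lborel b] bi by simp
      have "(\<lambda>s. indicator {t..T} s * (cos (k * t) * a s + sin (k * t) * b s)) =
          (\<lambda>s. cos (k * t) * (indicator {t..T} s * a s) + sin (k * t) * (indicator {t..T} s * b s))"
        by (auto simp: algebra_simps)
      then show ?thesis using ia ib by (simp add: A_def B_def)
    qed
    finally show ?thesis unfolding Z_def .
  qed
  have Az: "ACd T (T_mu T \<mu> w) DZ"
    by (rule ACd_cong[OF AZ zZ]) (use T0 in auto)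
  define CH where "CH = k * (integral\<^sup>L lborel (\<lambda>s. \<bar>b s\<bar>) + integral\<^sup>L lborel (\<lambda>s. \<bar>a s\<bar>))"
  have Hbd: "\<bar>Hh s\<bar> \<le> CH" for s
  proof -
    have "\<bar>cos (k * s) * B s - sin (k * s) * A s\<bar> \<le> \<bar>B s\<bar> + \<bar>A s\<bar>"
    proof -
      have "\<bar>cos (k * s) * B s\<bar> \<le> \<bar>B s\<bar>" unfolding abs_mult by (rule mult_left_le_one_le) auto
      moreover have "\<bar>sin (k * s) * A s\<bar> \<le> \<bar>A s\<bar>" unfolding abs_mult by (rule mult_left_le_one_le) auto
      ultimately show ?thesis by linarith
    qed
    also have "\<dots> \<le> integral\<^sup>L lborel (\<lambda>s. \<bar>b s\<bar>) + integral\<^sup>L lborel (\<lambda>s. \<bar>a s\<bar>)"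
      using Abd[of s] Bbd[of s] by linarith
    finally have "k * \<bar>cos (k * s) * B s - sin (k * s) * A s\<bar> \<le> CH"
      unfolding CH_def using k0 by (intro mult_left_mono) auto
    moreover have "0 \<le> k * \<bar>cos (k * s) * B s - sin (k * s) * A s\<bar>" using k0 by simp
    ultimately have "0 \<le> CH" by linarith
    with \<open>k * \<bar>cos (k * s) * B s - sin (k * s) * A s\<bar> \<le> CH\<close> show ?thesis
      unfolding Hh_def using k0 by (auto simp: indicator_def abs_mult)
  qed
  have DZi: "integrable lborel DZ" using ACdD(1)[OF AZ] .
  have [measurable]: "DZ \<in> borel_measurable borel" using DZi by auto
  have Hhm[measurable]: "Hh \<in> borel_measurable borel"
  proof -
    have "Hh = (\<lambda>s. DZ s + gw' s)" unfolding DZ_def by auto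
    then show ?thesis by simp
  qed
  have DZsq: "integrable lborel (\<lambda>x. (DZ x)^2 * indicator {0..T} x)"
  proof (rule Bochner_Integration.integrable_bound)
    show "integrable lborel (\<lambda>x. 2 * ((gw x)^2 * indicator {0..T} x) + 2 * CH^2 * indicator {0..T} x)"
      using H1_sq_int[OF hw] borel_integrable_atLeastAtMost[of 0 T "\<lambda>_. 1"] unfolding gw_def by simp
    show "(\<lambda>x. (DZ x)^2 * indicator {0..T} x) \<in> borel_measurable lborel" by measurable
    show "AE x in lborel. norm ((DZ x)^2 * indicator {0..T} x) \<le> norm (2 * ((gw x)^2 * indicator {0..T} x) + 2 * CH^2 * indicator {0..T} x)"
    proof (rule AE_I2)
      fix x
      have h2: "(Hh x)^2 \<le> CH^2" using Hbd[of x] by (metis abs_le_square_iff power2_abs abs_abs order.trans abs_ge_self)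
      have "(DZ x)^2 \<le> 2 * (gw' x)^2 + 2 * (Hh x)^2"
      proof -
        have "0 \<le> (gw' x + Hh x)^2" by simp
        then show ?thesis unfolding DZ_def by (simp add: power2_eq_square algebra_simps)
      qed
      then show "norm ((DZ x)^2 * indicator {0..T} x) \<le> norm (2 * ((gw x)^2 * indicator {0..T} x) + 2 * CH^2 * indicator {0..T} x)"
        using h2 by (auto simp: indicator_def gw'_def)
    qed
  qed
  have hz: "has_H1_deriv T (T_mu T \<mu> w) DZ" by (rule ACd_H1[OF Az DZsq])
  have hz': "has_H1_deriv T (T_mu T \<mu> w) (dH1 T (T_mu T \<mu> w))"
    by (rule H1_deriv) (use hz in \<open>auto simp: H1_def\<close>)
  have Az2: "ACd T (T_mu T \<mu> w) (\<lambda>s. dH1 T (T_mu T \<mu> w) s * indicator {0..T} s)"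
    by (rule H1_ACd[OF hz' T0])
  have ae: "AE x in lborel. dH1 T (T_mu T \<mu> w) x * indicator {0..T} x = DZ x"
    by (rule ACd_unique[OF Az2 Az T0])
  have [measurable]: "dH1 T (T_mu T \<mu> w) \<in> borel_measurable borel" by (rule H1_meas[OF hz'])
  define H where "H = (\<lambda>t. k * (cos (k * t) * B t - sin (k * t) * A t))"
  have AH: "ACd T H (\<lambda>s. \<mu> * (W s - Z s * indicator {0..T} s))"
  proof -
    have "ACd T (\<lambda>t. k * (cos (k * t) * B t + (-1) * (sin (k * t) * A t)))
       (\<lambda>s. k * ((((- k * sin (k * s)) * indicator {0..T} s) * B s + cos (k * s) * (- b s))
          + (-1) * ((((k * cos (k * s)) * indicator {0..T} s) * A s + sin (k * s) * (- a s)))))"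
      by (rule ACd_cmult[OF ACd_add[OF ACd_mult[OF ACd_cos AB] ACd_cmult[OF ACd_mult[OF ACd_sin AA]]]])
    then show ?thesis
    proof (rule ACd_cong)
      fix s
      have "k * ((((- k * sin (k * s)) * indicator {0..T} s) * B s + cos (k * s) * (- b s))
          + (-1) * ((((k * cos (k * s)) * indicator {0..T} s) * A s + sin (k * s) * (- a s))))
          = k * (sin (k * s) * a s - cos (k * s) * b s) - k * k * (Z s * indicator {0..T} s)"
        by (simp add: Z_def algebra_simps)
      then show "\<mu> * (W s - Z s * indicator {0..T} s) = k * ((((- k * sin (k * s)) * indicator {0..T} s) * B s + cos (k * s) * (- b s))
          + (-1) * ((((k * cos (k * s)) * indicator {0..T} s) * A s + sin (k * s) * (- a s))))"
        unfolding sc kk by (simp add: algebra_simps kk[symmetric])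
    qed (use T0 in \<open>auto simp: H_def\<close>)
  qed
  have AuH: "ACd T (\<lambda>t. u t * H t) (\<lambda>s. gu' s * H s + u s * (\<mu> * (W s - Z s * indicator {0..T} s)))"
    by (rule ACd_mult[OF Au AH])
  have A_T: "A T = 0"
    unfolding A_def
  proof (rule integral_eq_zero_AE)
    show "AE s in lborel. indicator {T..T} s * a s = 0"
      using AE_lborel_singleton[of T] by (rule eventually_mono) (simp add: indicator_def)
  qed
  have B_T: "B T = 0"
    unfolding B_def
  proof (rule integral_eq_zero_AE)
    show "AE s in lborel. indicator {T..T} s * b s = 0"
      using AE_lborel_singleton[of T] by (rule eventually_mono) (simp add: indicator_def)
  qed
  have HT: "H T = 0" by (simp add: H_def A_T B_T)
  have ibp0: "integral\<^sup>L lborel (\<lambda>s. gu' s * H s + u s * (\<mu> * (W s - Z s * indicator {0..T} s))) = 0"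
  proof -
    have "u T * H T = u 0 * H 0 + prim (\<lambda>s. gu' s * H s + u s * (\<mu> * (W s - Z s * indicator {0..T} s))) T"
      using ACdD(3)[OF AuH, of T] T0 by simp
    then have "prim (\<lambda>s. gu' s * H s + u s * (\<mu> * (W s - Z s * indicator {0..T} s))) T = 0"
      using u0 HT by simp
    moreover have "\<forall>x. x \<notin> {0..T} \<longrightarrow> gu' x * H x + u x * (\<mu> * (W x - Z x * indicator {0..T} x)) = 0"
      using ACdD(2)[OF AuH] by blast
    ultimately show ?thesis using prim_at_T[of T _ T] by simp
  qed
  define UZ where "UZ = (\<lambda>s. u s * Z s * indicator {0..T} s)"
  define UW where "UW = (\<lambda>s. u s * w s * indicator {0..T} s)"
  have i_uZ: "integrable lborel UZ" unfolding UZ_def by (rule ACd_integrable_prod[OF Au AZ])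
  have i_uW: "integrable lborel UW" unfolding UW_def by (rule ACd_integrable_prod[OF Au Aw])
  have [measurable]: "UZ \<in> borel_measurable borel" using i_uZ by auto
  have i_guH: "integrable lborel (\<lambda>s. gu' s * Hh s)" by (rule integrable_mult_bdd[OF gui Hhm Hbd])
  have i_gg: "integrable lborel (\<lambda>s. gu' s * gw' s)"
    using H1_prod_int[OF hu hw] unfolding gu'_def gw'_def gu_def gw_def .
  have e1: "(\<lambda>s. gu' s * H s + u s * (\<mu> * (W s - Z s * indicator {0..T} s))) =
      (\<lambda>s. gu' s * Hh s + \<mu> * UW s - \<mu> * UZ s)"
    by (auto simp: gu'_def Hh_def H_def W_def UW_def UZ_def indicator_def algebra_simps intro!: ext)
  have I1: "integral\<^sup>L lborel (\<lambda>s. gu' s * Hh s) + \<mu> * integral\<^sup>L lborel UW - \<mu> * integral\<^sup>L lborel UZ = 0"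
    using ibp0 unfolding e1 using i_guH i_uZ i_uW by simp
  have "b_mu T \<mu> u (T_mu T \<mu> w) = integral\<^sup>L lborel (\<lambda>t. - gu' t * (dH1 T (T_mu T \<mu> w) t * indicator {0..T} t) + \<mu> * UZ t)"
    unfolding b_mu_def set_lebesgue_integral_def
  proof (rule Bochner_Integration.integral_cong[OF refl])
    fix t show "indicator {0..T} t *\<^sub>R (- dH1 T u t * dH1 T (T_mu T \<mu> w) t + \<mu> * u t * T_mu T \<mu> w t) =
        - gu' t * (dH1 T (T_mu T \<mu> w) t * indicator {0..T} t) + \<mu> * UZ t"
      by (cases "t \<in> {0..T}") (simp_all add: zZ gu'_def gu_def UZ_def)
  qed
  also have "\<dots> = integral\<^sup>L lborel (\<lambda>t. - gu' t * DZ t + \<mu> * UZ t)"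
    by (rule integral_cong_AE) (use ae in \<open>auto elim!: eventually_mono\<close>)
  also have "\<dots> = integral\<^sup>L lborel (\<lambda>t. gu' t * gw' t - gu' t * Hh t + \<mu> * UZ t)"
    by (rule Bochner_Integration.integral_cong[OF refl]) (simp add: DZ_def algebra_simps)
  also have "\<dots> = integral\<^sup>L lborel (\<lambda>t. gu' t * gw' t) - integral\<^sup>L lborel (\<lambda>t. gu' t * Hh t) + \<mu> * integral\<^sup>L lborel UZ"
    using i_gg i_guH i_uZ by simp
  finally have bm: "b_mu T \<mu> u (T_mu T \<mu> w) = integral\<^sup>L lborel (\<lambda>t. gu' t * gw' t) - integral\<^sup>L lborel (\<lambda>t. gu' t * Hh t) + \<mu> * integral\<^sup>L lborel UZ" .
  have r1: "(LINT t:{0..T}|lborel. dH1 T u t * dH1 T w t) = integral\<^sup>L lborel (\<lambda>t. gu' t * gw' t)"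
    unfolding set_lebesgue_integral_def
    by (rule Bochner_Integration.integral_cong[OF refl]) (simp add: gu'_def gw'_def gu_def gw_def indicator_def)
  have r2: "(LINT t:{0..T}|lborel. u t * w t) = integral\<^sup>L lborel UW"
    unfolding set_lebesgue_integral_def
    by (rule Bochner_Integration.integral_cong[OF refl]) (simp add: UW_def)
  show ?thesis unfolding bm r1 r2 using I1 by simp
qed

lemma discr:
  fixes F G X :: real
  assumes h: "\<And>l. 0 \<le> F + 2 * l * X + l^2 * G" and G: "0 \<le> G"
  shows "X^2 \<le> F * G"
proof (cases "G = 0")
  case True
  have "X = 0"
  proof (rule ccontr)
    assume X: "X \<noteq> 0"
    have "0 \<le> F + 2 * (- (F + 1) / (2 * X)) * X" using h[of "- (F + 1) / (2 * X)"] True by simp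
    also have "\<dots> = -1" using X by (simp add: field_simps)
    finally show False by simp
  qed
  then show ?thesis using True by simp
next
  case False
  then have Gp: "0 < G" using G by simp
  have "0 \<le> F + 2 * (- X / G) * X + (- X / G)^2 * G" by (rule h)
  also have "\<dots> = F - X^2 / G" using Gp by (simp add: field_simps power2_eq_square)
  finally have "X^2 / G \<le> F" by simp
  then show ?thesis using Gp by (simp add: field_simps)
qed

lemma CS_int:
  fixes f g :: "real \<Rightarrow> real"
  assumes fg: "integrable lborel (\<lambda>x. f x * g x)" and ff: "integrable lborel (\<lambda>x. (f x)^2)"
    and gg: "integrable lborel (\<lambda>x. (g x)^2)"
  shows "integral\<^sup>L lborel (\<lambda>x. f x * g x) \<le> sqrt (integral\<^sup>L lborel (\<lambda>x. (f x)^2)) * sqrt (integral\<^sup>L lborel (\<lambda>x. (g x)^2))"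
proof -
  define F where "F = integral\<^sup>L lborel (\<lambda>x. (f x)^2)"
  define G where "G = integral\<^sup>L lborel (\<lambda>x. (g x)^2)"
  define X where "X = integral\<^sup>L lborel (\<lambda>x. f x * g x)"
  have G0: "0 \<le> G" unfolding G_def by (rule integral_nonneg_AE) simp
  have F0: "0 \<le> F" unfolding F_def by (rule integral_nonneg_AE) simp
  have "0 \<le> F + 2 * l * X + l^2 * G" for l
  proof -
    have "0 \<le> integral\<^sup>L lborel (\<lambda>x. (f x + l * g x)^2)" by (rule integral_nonneg_AE) simp
    also have "(\<lambda>x. (f x + l * g x)^2) = (\<lambda>x. (f x)^2 + (2 * l) * (f x * g x) + l^2 * (g x)^2)"
      by (auto simp: power2_eq_square algebra_simps)
    also have "integral\<^sup>L lborel \<dots> = F + 2 * l * X + l^2 * G"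
      using fg ff gg by (simp add: F_def G_def X_def)
    finally show ?thesis .
  qed
  then have "X^2 \<le> F * G" by (rule discr[OF _ G0])
  then have "sqrt (X^2) \<le> sqrt (F * G)" by (rule real_sqrt_le_mono)
  then have "\<bar>X\<bar> \<le> sqrt F * sqrt G" by (simp add: real_sqrt_mult)
  then show ?thesis unfolding F_def G_def X_def by linarith
qed

lemma CS2:
  fixes F1 F2 G1 G2 X1 X2 \<mu> :: real
  assumes "0 \<le> F1" "0 \<le> F2" "0 \<le> G1" "0 \<le> G2" "0 < \<mu>"
    and X1: "X1 \<le> sqrt F1 * sqrt G1" and X2: "X2 \<le> sqrt F2 * sqrt G2"
  shows "X1 + \<mu> * X2 \<le> sqrt (F1 + \<mu> * F2) * sqrt (G1 + \<mu> * G2)"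
proof -
  define a1 where "a1 = sqrt F1"
  define a2 where "a2 = sqrt (\<mu> * F2)"
  define b1 where "b1 = sqrt G1"
  define b2 where "b2 = sqrt (\<mu> * G2)"
  have a1s: "a1^2 = F1" and a2s: "a2^2 = \<mu> * F2" and b1s: "b1^2 = G1" and b2s: "b2^2 = \<mu> * G2"
    using assms by (simp_all add: a1_def a2_def b1_def b2_def)
  have "\<mu> * X2 \<le> \<mu> * (sqrt F2 * sqrt G2)" using X2 assms(5) by simp
  also have "\<mu> * (sqrt F2 * sqrt G2) = a2 * b2"
  proof -
    have "a2 * b2 = sqrt \<mu> * sqrt \<mu> * (sqrt F2 * sqrt G2)"
      unfolding a2_def b2_def real_sqrt_mult by (simp add: algebra_simps)
    then show ?thesis using assms(5) by simp
  qed
  finally have "X1 + \<mu> * X2 \<le> a1 * b1 + a2 * b2" using X1 unfolding a1_def b1_def by linarith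
  also have "a1 * b1 + a2 * b2 \<le> sqrt ((a1^2 + a2^2) * (b1^2 + b2^2))"
  proof (rule real_le_rsqrt)
    have "(a1^2 + a2^2) * (b1^2 + b2^2) - (a1 * b1 + a2 * b2)^2 = (a1 * b2 - a2 * b1)^2"
      by (simp add: power2_eq_square algebra_simps)
    moreover have "0 \<le> (a1 * b2 - a2 * b1)^2" by simp
    ultimately show "(a1 * b1 + a2 * b2)^2 \<le> (a1^2 + a2^2) * (b1^2 + b2^2)" by linarith
  qed
  also have "\<dots> = sqrt (F1 + \<mu> * F2) * sqrt (G1 + \<mu> * G2)"
    unfolding a1s a2s b1s b2s real_sqrt_mult ..
  finally show ?thesis .
qed

lemma parts:
  fixes T :: real and u w :: "real \<Rightarrow> real"
  assumes T: "T > 0" and u: "H1_0l T u" and w: "H1_0l T w"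
  shows "(LINT t:{0..T}|lborel. dH1 T u t * dH1 T w t) \<le>
           sqrt (LINT t:{0..T}|lborel. (dH1 T u t)^2) * sqrt (LINT t:{0..T}|lborel. (dH1 T w t)^2)"
    and "(LINT t:{0..T}|lborel. u t * w t) \<le>
           sqrt (LINT t:{0..T}|lborel. (u t)^2) * sqrt (LINT t:{0..T}|lborel. (w t)^2)"
    and "0 \<le> (LINT t:{0..T}|lborel. (dH1 T u t)^2)"
    and "0 \<le> (LINT t:{0..T}|lborel. (u t)^2)"
proof -
  have T0: "0 \<le> T" using T by simp
  have hu: "has_H1_deriv T u (dH1 T u)" using u unfolding H1_0l_def by (auto intro: H1_deriv)
  have hw: "has_H1_deriv T w (dH1 T w)" using w unfolding H1_0l_def by (auto intro: H1_deriv)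
  have Au: "ACd T u (\<lambda>s. dH1 T u s * indicator {0..T} s)" by (rule H1_ACd[OF hu T0])
  have Aw: "ACd T w (\<lambda>s. dH1 T w s * indicator {0..T} s)" by (rule H1_ACd[OF hw T0])
  have sl: "(LINT t:{0..T}|lborel. p t) = integral\<^sup>L lborel (\<lambda>t. p t * indicator {0..T} t)" for p :: "real \<Rightarrow> real"
    unfolding set_lebesgue_integral_def by (simp add: mult.commute)
  have sq: "(\<lambda>t. (p t * indicator {0..T} t)^2) = (\<lambda>t. (p t)^2 * indicator {0..T} t)" for p :: "real \<Rightarrow> real"
    by (auto simp: indicator_def)
  have pr: "(\<lambda>t. (p t * indicator {0..T} t) * (q t * indicator {0..T} t)) = (\<lambda>t. p t * q t * indicator {0..T} t)" for p q :: "real \<Rightarrow> real"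
    by (auto simp: indicator_def)
  show "(LINT t:{0..T}|lborel. dH1 T u t * dH1 T w t) \<le>
           sqrt (LINT t:{0..T}|lborel. (dH1 T u t)^2) * sqrt (LINT t:{0..T}|lborel. (dH1 T w t)^2)"
    using CS_int[of "\<lambda>t. dH1 T u t * indicator {0..T} t" "\<lambda>t. dH1 T w t * indicator {0..T} t"]
      H1_prod_int[OF hu hw] H1_prod_int[OF hu hu] H1_prod_int[OF hw hw]
    unfolding sl sq pr power2_eq_square by simp
  show "(LINT t:{0..T}|lborel. u t * w t) \<le>
           sqrt (LINT t:{0..T}|lborel. (u t)^2) * sqrt (LINT t:{0..T}|lborel. (w t)^2)"
    using CS_int[of "\<lambda>t. u t * indicator {0..T} t" "\<lambda>t. w t * indicator {0..T} t"]
      ACd_integrable_prod[OF Au Aw] ACd_integrable_prod[OF Au Au] ACd_integrable_prod[OF Aw Aw]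
    unfolding sl sq pr power2_eq_square by simp
  show "0 \<le> (LINT t:{0..T}|lborel. (dH1 T u t)^2)" unfolding sl by (rule integral_nonneg_AE) (simp add: indicator_def)
  show "0 \<le> (LINT t:{0..T}|lborel. (u t)^2)" unfolding sl by (rule integral_nonneg_AE) (simp add: indicator_def)
qed

theorem mainTheorem3:
  fixes T \<mu> :: real
  assumes "T > 0" and "\<mu> > 0"
  shows "(\<forall>u w. H1_0l T u \<and> H1_0l T w \<longrightarrow>
            b_mu T \<mu> u (T_mu T \<mu> w) =
              (LINT t:{0..T}|lborel. dH1 T u t * dH1 T w t) + \<mu> * (LINT t:{0..T}|lborel. u t * w t))
       \<and> (\<forall>u w. H1_0l T u \<and> H1_0l T w \<longrightarrow>
            b_mu T \<mu> u (T_mu T \<mu> w) \<le> H1mu_norm T \<mu> u * H1mu_norm T \<mu> w)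
       \<and> (\<forall>u. H1_0l T u \<longrightarrow> b_mu T \<mu> u (T_mu T \<mu> u) = (H1mu_norm T \<mu> u)^2)"
proof (intro conjI allI impI)
  fix u w assume uw: "H1_0l T u \<and> H1_0l T w"
  then show "b_mu T \<mu> u (T_mu T \<mu> w) =
              (LINT t:{0..T}|lborel. dH1 T u t * dH1 T w t) + \<mu> * (LINT t:{0..T}|lborel. u t * w t)"
    using main_eq[OF assms] by blast
next
  fix u w assume uw: "H1_0l T u \<and> H1_0l T w"
  then have u: "H1_0l T u" and w: "H1_0l T w" by auto
  have eq: "b_mu T \<mu> u (T_mu T \<mu> w) =
              (LINT t:{0..T}|lborel. dH1 T u t * dH1 T w t) + \<mu> * (LINT t:{0..T}|lborel. u t * w t)"
    by (rule main_eq[OF assms u w])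
  show "b_mu T \<mu> u (T_mu T \<mu> w) \<le> H1mu_norm T \<mu> u * H1mu_norm T \<mu> w"
    unfolding eq H1mu_norm_def
    by (rule CS2[OF parts(3)[OF assms(1) u u] parts(4)[OF assms(1) u u]
        parts(3)[OF assms(1) w w] parts(4)[OF assms(1) w w] assms(2)
        parts(1)[OF assms(1) u w] parts(2)[OF assms(1) u w]])
next
  fix u assume u: "H1_0l T u"
  have eq: "b_mu T \<mu> u (T_mu T \<mu> u) =
              (LINT t:{0..T}|lborel. dH1 T u t * dH1 T u t) + \<mu> * (LINT t:{0..T}|lborel. u t * u t)"
    by (rule main_eq[OF assms u u])
  have nn: "0 \<le> (LINT t:{0..T}|lborel. (dH1 T u t)^2) + \<mu> * (LINT t:{0..T}|lborel. (u t)^2)"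
    using parts(3)[OF assms(1) u u] parts(4)[OF assms(1) u u] assms(2) by simp
  show "b_mu T \<mu> u (T_mu T \<mu> u) = (H1mu_norm T \<mu> u)^2"
    unfolding eq H1mu_norm_def real_sqrt_pow2[OF nn] by (simp add: power2_eq_square)
qed

end
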